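(* Let $x^*=0\in\Sigma$ be a regular grazing point of order $4$ of an impacting hybrid system $(X,R)$ in local form, and let $\Gamma$ be the orbit of $X$ through $x^*$. Let $\Pi_3=\{x\in\mathbb{R}^n:\ \mathcal{L}_X^3H(x)=0\}$. Then (1) $\Pi_3$ is transverse at $x^*$ to the $(n-1)$-dimensional discontinuity manifold $\Sigma$, and (2) $\Pi_3$ is transverse at $x^*$ to the orbit $\Gamma$.
   Context: Lie derivatives: $\mathcal{L}_XG(x)=\nabla G(x)\cdot X(x)$ and $\mathcal{L}_X^kH=\mathcal{L}_X(\mathcal{L}_X^{k-1}H)$. An impacting hybrid system $(X,R)$ in local form consists of: $\Sigma=\{x:H(x)=0\}$ with $0$ a regular value of the smooth function $H$, $S^+=\{x:H(x)>0\}$, the ODE $x'=X(x)$ for $x\in S^+$ with $X$ a $\mathcal{C}^3$ vector field on $\mathbb{R}^n$, and a reset map $R:\Sigma\to\Sigma$, $R(x)=x+W(x)\mathcal{L}_XH(x)$ with $W:\mathbb{R}^n\to\mathbb{R}^n$ smooth. A point $x^*\in\Sigma$ is a regular grazing point of order $4$ if $\mathcal{L}_XH(x^* )=\mathcal{L}_X^2H(x^* )=\mathcal{L}_X^3H(x^* )=0$ and $\mathcal{L}_X^4H(x^* )\neq0$. *)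

theory Defs
  imports "HOL-Analysis.Analysis"
begin

fun dderiv :: "('a::real_normed_vector \<Rightarrow> 'b::real_normed_vector) \<Rightarrow> 'a list \<Rightarrow> 'a \<Rightarrow> 'b" where
  "dderiv f [] = f"
| "dderiv f (v # vs) = (\<lambda>x. frechet_derivative (dderiv f vs) (at x) v)"

definition Ck :: "nat \<Rightarrow> ('a::real_normed_vector \<Rightarrow> 'b::real_normed_vector) \<Rightarrow> bool" where
  "Ck k f \<longleftrightarrow>
     (\<forall>vs. length vs < k \<longrightarrow> (\<forall>x. dderiv f vs differentiable (at x))) \<and>
     (\<forall>vs. length vs \<le> k \<longrightarrow> continuous_on UNIV (dderiv f vs))"

definition smooth_fun :: "('a::real_normed_vector \<Rightarrow> 'b::real_normed_vector) \<Rightarrow> bool" where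
  "smooth_fun f \<longleftrightarrow> (\<forall>k. Ck k f)"

definition lie_deriv :: "('a::euclidean_space \<Rightarrow> 'a) \<Rightarrow> ('a \<Rightarrow> real) \<Rightarrow> 'a \<Rightarrow> real" where
  "lie_deriv X G = (\<lambda>x. frechet_derivative G (at x) (X x))"

definition lie_pow :: "('a::euclidean_space \<Rightarrow> 'a) \<Rightarrow> nat \<Rightarrow> ('a \<Rightarrow> real) \<Rightarrow> 'a \<Rightarrow> real" where
  "lie_pow X k H = (lie_deriv X ^^ k) H"

definition regular_value :: "('a::euclidean_space \<Rightarrow> real) \<Rightarrow> real \<Rightarrow> bool" where
  "regular_value H c \<longleftrightarrow> (\<forall>x. H x = c \<longrightarrow> surj (frechet_derivative H (at x)))"

text \<open>Tangent space at p of a level set {G = c} (when DG(p) \<noteq> 0): kernel of DG(p).\<close>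
definition level_tangent :: "('a::euclidean_space \<Rightarrow> real) \<Rightarrow> 'a \<Rightarrow> 'a set" where
  "level_tangent G p = {v. frechet_derivative G (at p) v = 0}"

definition transverse_subspaces :: "'a::euclidean_space set \<Rightarrow> 'a set \<Rightarrow> bool" where
  "transverse_subspaces U V \<longleftrightarrow> {u + v | u v. u \<in> U \<and> v \<in> V} = UNIV"

end

theory Submission
  imports Defs
begin

fun Dn :: "nat \<Rightarrow> ('a::real_normed_vector \<Rightarrow> 'b::real_normed_vector) \<Rightarrow> bool" where
  "Dn 0 f = True"
| "Dn (Suc k) f = ((\<forall>x. f differentiable (at x)) \<and> (\<forall>v. Dn k (\<lambda>x. frechet_derivative f (at x) v)))"

lemma Dn_mono: "Dn (Suc k) f \<Longrightarrow> Dn k f"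
proof (induction k arbitrary: f)
  case 0 then show ?case by simp
next
  case (Suc k) then show ?case by (metis Dn.simps(2))
qed

lemma Dn_const: "Dn k (\<lambda>x. c)"
  by (induction k arbitrary: c) auto

lemma Dn_add:
  fixes f g :: "'a::real_normed_vector \<Rightarrow> 'b::real_normed_vector"
  shows "Dn k f \<Longrightarrow> Dn k g \<Longrightarrow> Dn k (\<lambda>x. f x + g x)"
proof (induction k arbitrary: f g)
  case 0 then show ?case by simp
next
  case (Suc k)
  have d: "frechet_derivative (\<lambda>x. f x + g x) (at x) v
      = frechet_derivative f (at x) v + frechet_derivative g (at x) v" for x v
  proof -
    have "f differentiable at x" "g differentiable at x" using Suc.prems by auto
    then have "((\<lambda>x. f x + g x) has_derivative (\<lambda>h. frechet_derivative f (at x) h + frechet_derivative g (at x) h)) (at x)"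
      by (intro has_derivative_add) (auto simp: frechet_derivative_works)
    then show ?thesis using frechet_derivative_at by metis
  qed
  show ?case using Suc by (simp add: d)
qed

lemma Dn_mult:
  fixes f g :: "'a::real_normed_vector \<Rightarrow> real"
  shows "Dn k f \<Longrightarrow> Dn k g \<Longrightarrow> Dn k (\<lambda>x. f x * g x)"
proof (induction k arbitrary: f g)
  case 0 then show ?case by simp
next
  case (Suc k)
  have d: "frechet_derivative (\<lambda>x. f x * g x) (at x) v
      = f x * frechet_derivative g (at x) v + frechet_derivative f (at x) v * g x" for x v
  proof -
    have "f differentiable at x" "g differentiable at x" using Suc.prems by auto
    then have "((\<lambda>x. f x * g x) has_derivative (\<lambda>h. f x * frechet_derivative g (at x) h + frechet_derivative f (at x) h * g x)) (at x)"
      by (intro has_derivative_mult) (auto simp: frechet_derivative_works)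
    then show ?thesis using frechet_derivative_at by metis
  qed
  have fk: "Dn k f" "Dn k g" using Suc.prems Dn_mono by blast+
  have "Dn k (\<lambda>x. f x * frechet_derivative g (at x) v + frechet_derivative f (at x) v * g x)" for v
    using Suc.prems fk by (intro Dn_add Suc.IH) auto
  moreover have "(\<lambda>x. f x * g x) differentiable at x" for x
    using Suc.prems by auto
  ultimately show ?case by (simp add: d)
qed

lemma Dn_sum:
  fixes f :: "'i \<Rightarrow> 'a::real_normed_vector \<Rightarrow> 'b::real_normed_vector"
  shows "finite S \<Longrightarrow> (\<And>i. i \<in> S \<Longrightarrow> Dn k (f i)) \<Longrightarrow> Dn k (\<lambda>x. \<Sum>i\<in>S. f i x)"
proof (induction S rule: finite_induct)
  case empty then show ?case by (simp add: Dn_const)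
next
  case (insert a S)
  then show ?case by (simp add: Dn_add)
qed

lemma Dn_inner:
  fixes X :: "'a::real_normed_vector \<Rightarrow> 'c::real_inner"
  shows "Dn k X \<Longrightarrow> Dn k (\<lambda>x. X x \<bullet> i)"
proof (induction k arbitrary: X)
  case 0 then show ?case by simp
next
  case (Suc k)
  have d: "frechet_derivative (\<lambda>x. X x \<bullet> i) (at x) v = frechet_derivative X (at x) v \<bullet> i" for x v
  proof -
    have "X differentiable at x" using Suc.prems by auto
    then have "((\<lambda>x. X x \<bullet> i) has_derivative (\<lambda>h. frechet_derivative X (at x) h \<bullet> i)) (at x)"
      by (intro has_derivative_inner_left) (auto simp: frechet_derivative_works)
    then show ?thesis using frechet_derivative_at by metis
  qed
  have "(\<lambda>x. X x \<bullet> i) differentiable at x" for x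
    using Suc.prems by auto
  then show ?case using Suc by (simp add: d)
qed

lemma Dn_lie:
  fixes X :: "'a::euclidean_space \<Rightarrow> 'a" and G :: "'a \<Rightarrow> real"
  assumes "Dn (Suc k) G" "Dn k X"
  shows "Dn k (lie_deriv X G)"
proof -
  have eq: "lie_deriv X G = (\<lambda>x. \<Sum>i\<in>Basis. (X x \<bullet> i) * frechet_derivative G (at x) i)"
  proof
    fix x
    have lin: "linear (frechet_derivative G (at x))"
      using assms(1) by (simp add: linear_frechet_derivative)
    have "frechet_derivative G (at x) (X x) = frechet_derivative G (at x) (\<Sum>i\<in>Basis. (X x \<bullet> i) *\<^sub>R i)"
      by (simp add: euclidean_representation)
    also have "\<dots> = (\<Sum>i\<in>Basis. (X x \<bullet> i) * frechet_derivative G (at x) i)"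
      using lin by (simp add: real_vector.linear_sum linear_cmul)
    finally show "lie_deriv X G x = (\<Sum>i\<in>Basis. (X x \<bullet> i) * frechet_derivative G (at x) i)"
      by (simp add: lie_deriv_def)
  qed
  show ?thesis unfolding eq
    using assms by (intro Dn_sum Dn_mult Dn_inner) auto
qed

lemma dderiv_append: "dderiv (dderiv f [v]) vs = dderiv f (vs @ [v])"
  by (induction vs) auto

lemma Ck_Dn_aux:
  "(\<forall>vs. length vs < k \<longrightarrow> (\<forall>x. dderiv f vs differentiable (at x))) \<Longrightarrow> Dn k f"
proof (induction k arbitrary: f)
  case 0 then show ?case by simp
next
  case (Suc k)
  have "Dn k (dderiv f [v])" for v
  proof (rule Suc.IH, intro allI impI)
    fix vs :: "'a list" and x assume "length vs < k"
    then show "dderiv (dderiv f [v]) vs differentiable at x"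
      unfolding dderiv_append using Suc.prems by auto
  qed
  moreover have "\<forall>x. f differentiable at x"
    using Suc.prems[rule_format, of "[]"] by simp
  ultimately show ?case by simp
qed

lemma Ck_Dn: "Ck k f \<Longrightarrow> Dn k f"
  unfolding Ck_def using Ck_Dn_aux by blast

theorem proposition1:
  fixes X :: "'a::euclidean_space \<Rightarrow> 'a"
    and H :: "'a \<Rightarrow> real"
    and W :: "'a \<Rightarrow> 'a"
    and R :: "'a \<Rightarrow> 'a"
  assumes X_C3: "Ck 3 X"
    and H_smooth: "smooth_fun H"
    and W_smooth: "smooth_fun W"
    and regval: "regular_value H 0"
    and R_def: "\<And>x. H x = 0 \<Longrightarrow> R x = x + lie_deriv X H x *\<^sub>R W x"
    and R_maps: "\<And>x. H x = 0 \<Longrightarrow> H (R x) = 0"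
    and on_Sigma: "H 0 = 0"
    and graz1: "lie_pow X 1 H 0 = 0"
    and graz2: "lie_pow X 2 H 0 = 0"
    and graz3: "lie_pow X 3 H 0 = 0"
    and graz4: "lie_pow X 4 H 0 \<noteq> 0"
  shows "frechet_derivative (lie_pow X 3 H) (at 0) \<noteq> (\<lambda>v. 0)
         \<and> transverse_subspaces (level_tangent (lie_pow X 3 H) 0) (level_tangent H 0)
         \<and> transverse_subspaces (level_tangent (lie_pow X 3 H) 0) (span {X 0})"
proof -
  define f where "f = frechet_derivative (lie_pow X 3 H) (at 0)"
  define g where "g = frechet_derivative H (at 0)"
  have L3: "lie_pow X 3 H = lie_deriv X (lie_deriv X (lie_deriv X H))"
    by (simp add: lie_pow_def numeral_eq_Suc)
  have L4: "lie_pow X 4 H = lie_deriv X (lie_pow X 3 H)"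
    by (simp add: lie_pow_def numeral_eq_Suc)
  have fX: "f (X 0) \<noteq> 0" using graz4 by (simp add: L4 f_def lie_deriv_def)
  have gX: "g (X 0) = 0" using graz1 by (simp add: g_def lie_pow_def lie_deriv_def)
  have X3: "Dn 3 X" using X_C3 Ck_Dn by blast
  have X2: "Dn 2 X" using X3 Dn_mono[of 2] by (simp add: numeral_eq_Suc)
  have X1: "Dn 1 X" using X2 Dn_mono[of 1] by (simp add: numeral_eq_Suc)
  have H4: "Dn 4 H" using H_smooth Ck_Dn unfolding smooth_fun_def by blast
  have L1: "Dn 3 (lie_deriv X H)" using Dn_lie[of 3 H X] H4 X3 by (simp add: numeral_eq_Suc)
  have L2: "Dn 2 (lie_deriv X (lie_deriv X H))" using Dn_lie[of 2 _ X] L1 X2 by (simp add: numeral_eq_Suc)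
  have L3': "Dn 1 (lie_pow X 3 H)" unfolding L3 using Dn_lie[of 1 _ X] L2 X1 by (simp add: numeral_eq_Suc)
  have linf: "linear f" unfolding f_def using L3' by (simp add: linear_frechet_derivative)
  have ling: "linear g" unfolding g_def using H4 by (simp add: numeral_eq_Suc linear_frechet_derivative)
  obtain p where gp: "g p = 1" using regval on_Sigma unfolding regular_value_def g_def surj_def by metis
  define q where "q = p - (f p / f (X 0)) *\<^sub>R X 0"
  have fq: "f q = 0" using fX linf by (simp add: q_def real_vector.linear_diff linear_cmul)
  have gq: "g q = 1" using gX ling gp by (simp add: q_def real_vector.linear_diff linear_cmul)
  have P1: "f \<noteq> (\<lambda>v. 0)" using fX by auto
  have P2: "transverse_subspaces {v. f v = 0} {v. g v = 0}"
    unfolding transverse_subspaces_def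
  proof (auto)
    fix w
    have "w = g w *\<^sub>R q + (w - g w *\<^sub>R q)" by simp
    moreover have "f (g w *\<^sub>R q) = 0" using fq linf by (simp add: linear_cmul)
    moreover have "g (w - g w *\<^sub>R q) = 0" using gq ling by (simp add: real_vector.linear_diff linear_cmul)
    ultimately show "\<exists>u v. w = u + v \<and> f u = 0 \<and> g v = 0" by blast
  qed
  have P3: "transverse_subspaces {v. f v = 0} (span {X 0})"
    unfolding transverse_subspaces_def
  proof (auto)
    fix w
    have "w = (w - (f w / f (X 0)) *\<^sub>R X 0) + (f w / f (X 0)) *\<^sub>R X 0" by simp
    moreover have "f (w - (f w / f (X 0)) *\<^sub>R X 0) = 0" using fX linf by (simp add: real_vector.linear_diff linear_cmul)
    moreover have "(f w / f (X 0)) *\<^sub>R X 0 \<in> span {X 0}" by (simp add: span_base span_mul)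
    ultimately show "\<exists>u v. w = u + v \<and> f u = 0 \<and> v \<in> span {X 0}" by blast
  qed
  show ?thesis using P1 P2 P3 unfolding level_tangent_def f_def g_def by simp
qed

end
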